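(* In a combinatorial auction with single-dimensional signals $s_i\in\{0,1,\dots,k-1\}$, where $k\ge2$ is a power of $2$, and strong-SOS valuations, the Random Bucket mechanism is universally ex-post IC-IR, and for every true profile $\mathbf{s}$ (reported truthfully) with welfare-maximizing allocation $T^*$, its expected welfare is at least $\frac{1}{2\log_2 k}\mathsf{SELF}$, where $\mathsf{SELF}=\sum_{\ell=1}^{k-1}\sum_{i:s_i=\ell}v_{iT_i^*}(\mathbf{0}_{-i},s_i)$.
   Context: Setting: $n$ agents, $m$ items; agent $i$ has private signal $s_i$; value for bundle $T$ is $v_{iT}(\mathbf{s})\ge0$, public, weakly increasing in each coordinate, strictly in $s_i$. Strong-SOS: for every $j$, $\delta\ge0$, and profiles $\mathbf{s}'\le\mathbf{s}$ coordinate-wise, $v(\mathbf{s}'_{-j},s'_j+\delta)-v(\mathbf{s}'_{-j},s'_j)\ge v(\mathbf{s}_{-j},s_j+\delta)-v(\mathbf{s}_{-j},s_j)$; every $v_{iT}$ is strong-SOS. Allocations assign disjoint bundles; utility = true value of received bundle minus payment; ex-post IC/IR, universal, as usual. Random Bucket (on reports $\mathbf{s}$): choose $\ell$ uniformly in $\{1,\dots,\log_2k\}$; $N_{B_\ell}=\{i:s_i\ge2^{\ell-1}\}$, $N_{\neg B_\ell}$ the rest; for $i\in N_{B_\ell}$, $\bar v_{iT}=v_{iT}(\mathbf{s}_{N_{\neg B_\ell}},\mathbf{2^{\ell-1}}_{N_{B_\ell}})$ (signals of all agents in $N_{B_\ell}$ replaced by $2^{\ell-1}$), else $\bar v_{iT}=0$;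 allocate $\bar T\in\arg\max\sum_{i\in N_{B_\ell}}\bar v_{i\bar T_i}$ among agents of $N_{B_\ell}$; agent receiving $\bar T_i$ pays $v_{i\bar T_i}(\mathbf{s}_{-i},2^{\ell-1}-1)$. *)

theory Defs
  imports Complex_Main
begin

text \<open>Agents are the elements of a finite type 'a, items the elements of a finite
type 'b; a bundle is a set of items. A valuation system is
v :: 'a => 'b set => ('a => nat) => real, where v i T s is agent i's value
for bundle T at signal profile s.\<close>

definition valid_profile :: "nat \<Rightarrow> ('a \<Rightarrow> nat) \<Rightarrow> bool" where
  "valid_profile k s \<longleftrightarrow> (\<forall>i. s i < k)"

definition nonneg_vals :: "nat \<Rightarrow> ('a \<Rightarrow> 'b set \<Rightarrow> ('a \<Rightarrow> nat) \<Rightarrow> real) \<Rightarrow> bool" where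
  "nonneg_vals k v \<longleftrightarrow> (\<forall>i T s. valid_profile k s \<longrightarrow> 0 \<le> v i T s)"

definition normalized_vals :: "nat \<Rightarrow> ('a \<Rightarrow> 'b set \<Rightarrow> ('a \<Rightarrow> nat) \<Rightarrow> real) \<Rightarrow> bool" where
  "normalized_vals k v \<longleftrightarrow> (\<forall>i s. valid_profile k s \<longrightarrow> v i {} s = 0)"

definition monotone_vals :: "nat \<Rightarrow> ('a \<Rightarrow> 'b set \<Rightarrow> ('a \<Rightarrow> nat) \<Rightarrow> real) \<Rightarrow> bool" where
  "monotone_vals k v \<longleftrightarrow>
     (\<forall>i T s j x. valid_profile k s \<longrightarrow> x < k \<longrightarrow> s j \<le> x \<longrightarrow> v i T s \<le> v i T (s(j := x)))"

definition strict_own_vals :: "nat \<Rightarrow> ('a \<Rightarrow> 'b set \<Rightarrow> ('a \<Rightarrow> nat) \<Rightarrow> real) \<Rightarrow> bool" where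
  "strict_own_vals k v \<longleftrightarrow>
     (\<forall>i T s x. T \<noteq> {} \<longrightarrow> valid_profile k s \<longrightarrow> x < k \<longrightarrow> s i < x \<longrightarrow> v i T s < v i T (s(i := x)))"

definition strong_SOS :: "nat \<Rightarrow> (('a \<Rightarrow> nat) \<Rightarrow> real) \<Rightarrow> bool" where
  "strong_SOS k f \<longleftrightarrow>
     (\<forall>j \<delta> s s'. valid_profile k s \<longrightarrow> valid_profile k s' \<longrightarrow> (\<forall>a. s' a \<le> s a) \<longrightarrow>
        s j + \<delta> < k \<longrightarrow>
        f (s'(j := s' j + \<delta>)) - f s' \<ge> f (s(j := s j + \<delta>)) - f s)"

definition feasible_alloc :: "('a \<Rightarrow> 'b set) \<Rightarrow> bool" where
  "feasible_alloc A \<longleftrightarrow> (\<forall>i j. i \<noteq> j \<longrightarrow> A i \<inter> A j = {})"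

definition welfare :: "('a::finite \<Rightarrow> 'b set \<Rightarrow> ('a \<Rightarrow> nat) \<Rightarrow> real) \<Rightarrow> ('a \<Rightarrow> 'b set) \<Rightarrow> ('a \<Rightarrow> nat) \<Rightarrow> real" where
  "welfare v A s = (\<Sum>i\<in>UNIV. v i (A i) s)"

definition opt_alloc :: "('a::finite \<Rightarrow> 'b set \<Rightarrow> ('a \<Rightarrow> nat) \<Rightarrow> real) \<Rightarrow> ('a \<Rightarrow> nat) \<Rightarrow> ('a \<Rightarrow> 'b set) \<Rightarrow> bool" where
  "opt_alloc v s A \<longleftrightarrow> feasible_alloc A \<and> (\<forall>A'. feasible_alloc A' \<longrightarrow> welfare v A' s \<le> welfare v A s)"

text \<open>A (deterministic) tie-breaking rule choosing, for a set B of agents and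
valuations w, an allocation among agents of B maximizing sum over B of w.\<close>
definition argmax_selector :: "('a set \<Rightarrow> ('a \<Rightarrow> 'b set \<Rightarrow> real) \<Rightarrow> ('a \<Rightarrow> 'b set)) \<Rightarrow> bool" where
  "argmax_selector sel \<longleftrightarrow>
     (\<forall>B w. feasible_alloc (sel B w) \<and> (\<forall>i. i \<notin> B \<longrightarrow> sel B w i = {}) \<and>
        (\<forall>A. feasible_alloc A \<longrightarrow> (\<forall>i. i \<notin> B \<longrightarrow> A i = {}) \<longrightarrow>
             (\<Sum>i\<in>B. w i (A i)) \<le> (\<Sum>i\<in>B. w i (sel B w i))))"

text \<open>Random Bucket, for a fixed outcome l of the random choice, on reports r.\<close>
definition rb_bucket :: "nat \<Rightarrow> ('a \<Rightarrow> nat) \<Rightarrow> 'a set" where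
  "rb_bucket l r = {i. 2 ^ (l - 1) \<le> r i}"

definition rb_vbar :: "('a \<Rightarrow> 'b set \<Rightarrow> ('a \<Rightarrow> nat) \<Rightarrow> real) \<Rightarrow> nat \<Rightarrow> ('a \<Rightarrow> nat) \<Rightarrow> 'a \<Rightarrow> 'b set \<Rightarrow> real" where
  "rb_vbar v l r i T =
     (if i \<in> rb_bucket l r
      then v i T (\<lambda>j. if j \<in> rb_bucket l r then 2 ^ (l - 1) else r j)
      else 0)"

definition rb_alloc ::
  "('a set \<Rightarrow> ('a \<Rightarrow> 'b set \<Rightarrow> real) \<Rightarrow> ('a \<Rightarrow> 'b set)) \<Rightarrow>
   ('a \<Rightarrow> 'b set \<Rightarrow> ('a \<Rightarrow> nat) \<Rightarrow> real) \<Rightarrow> nat \<Rightarrow> ('a \<Rightarrow> nat) \<Rightarrow> 'a \<Rightarrow> 'b set" where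
  "rb_alloc sel v l r = sel (rb_bucket l r) (rb_vbar v l r)"

definition rb_pay ::
  "('a set \<Rightarrow> ('a \<Rightarrow> 'b set \<Rightarrow> real) \<Rightarrow> ('a \<Rightarrow> 'b set)) \<Rightarrow>
   ('a \<Rightarrow> 'b set \<Rightarrow> ('a \<Rightarrow> nat) \<Rightarrow> real) \<Rightarrow> nat \<Rightarrow> ('a \<Rightarrow> nat) \<Rightarrow> 'a \<Rightarrow> real" where
  "rb_pay sel v l r i =
     (if i \<in> rb_bucket l r then v i (rb_alloc sel v l r i) (r(i := 2 ^ (l - 1) - 1)) else 0)"

definition rb_utility ::
  "('a set \<Rightarrow> ('a \<Rightarrow> 'b set \<Rightarrow> real) \<Rightarrow> ('a \<Rightarrow> 'b set)) \<Rightarrow>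
   ('a \<Rightarrow> 'b set \<Rightarrow> ('a \<Rightarrow> nat) \<Rightarrow> real) \<Rightarrow> nat \<Rightarrow> ('a \<Rightarrow> nat) \<Rightarrow> ('a \<Rightarrow> nat) \<Rightarrow> 'a \<Rightarrow> real" where
  "rb_utility sel v l s r i = v i (rb_alloc sel v l r i) s - rb_pay sel v l r i"

text \<open>Universal ex-post IC and IR: every deterministic mechanism in the support
(l = 1..L) is ex-post IC and IR on the signal domain {0..k-1}.\<close>
definition rb_universal_IC_IR ::
  "('a set \<Rightarrow> ('a \<Rightarrow> 'b set \<Rightarrow> real) \<Rightarrow> ('a \<Rightarrow> 'b set)) \<Rightarrow>
   ('a \<Rightarrow> 'b set \<Rightarrow> ('a \<Rightarrow> nat) \<Rightarrow> real) \<Rightarrow> nat \<Rightarrow> nat \<Rightarrow> bool" where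
  "rb_universal_IC_IR sel v k L \<longleftrightarrow>
     (\<forall>l \<in> {1..L}. \<forall>s i. valid_profile k s \<longrightarrow>
        0 \<le> rb_utility sel v l s s i \<and>
        (\<forall>x. x < k \<longrightarrow> rb_utility sel v l s (s(i := x)) i \<le> rb_utility sel v l s s i))"

definition rb_expected_welfare ::
  "('a set \<Rightarrow> ('a \<Rightarrow> 'b set \<Rightarrow> real) \<Rightarrow> ('a \<Rightarrow> 'b set)) \<Rightarrow>
   ('a::finite \<Rightarrow> 'b set \<Rightarrow> ('a \<Rightarrow> nat) \<Rightarrow> real) \<Rightarrow> nat \<Rightarrow> ('a \<Rightarrow> nat) \<Rightarrow> real" where
  "rb_expected_welfare sel v L s = (\<Sum>l = 1..L. welfare v (rb_alloc sel v l s) s) / real L"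

definition SELF :: "('a::finite \<Rightarrow> 'b set \<Rightarrow> ('a \<Rightarrow> nat) \<Rightarrow> real) \<Rightarrow> nat \<Rightarrow> ('a \<Rightarrow> nat) \<Rightarrow> ('a \<Rightarrow> 'b set) \<Rightarrow> real" where
  "SELF v k s T = (\<Sum>l = 1..k - 1. \<Sum>i \<in> {i. s i = l}. v i (T i) ((\<lambda>_. 0)(i := s i)))"

end

theory Submission imports Defs begin

lemma multi_mono:
  fixes v :: "'a::finite \<Rightarrow> 'b set \<Rightarrow> ('a \<Rightarrow> nat) \<Rightarrow> real"
  assumes mono: "monotone_vals k v" and vs: "valid_profile k s"
  shows "valid_profile k s' \<Longrightarrow> (\<forall>j. s' j \<le> s j) \<Longrightarrow> v i T s' \<le> v i T s"
proof -
  have "valid_profile k s' \<Longrightarrow> (\<forall>j. s' j \<le> s j) \<Longrightarrow> (\<forall>j. j \<notin> D \<longrightarrow> s' j = s j) \<Longrightarrow> v i T s' \<le> v i T s" if "finite D" for D s'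
    using that
  proof (induction D arbitrary: s' rule: finite_induct)
    case empty
    then have "s' = s" by auto
    then show ?case by simp
  next
    case (insert a D)
    let ?s2 = "s'(a := s a)"
    have v2: "valid_profile k ?s2" using insert.prems vs unfolding valid_profile_def by auto
    have "v i T s' \<le> v i T ?s2"
      using mono insert.prems vs unfolding monotone_vals_def valid_profile_def by blast
    also have "\<dots> \<le> v i T s"
    proof (rule insert.IH[OF v2])
      show "\<forall>j. ?s2 j \<le> s j" using insert.prems by simp
      show "\<forall>j. j \<notin> D \<longrightarrow> ?s2 j = s j" using insert.prems by simp
    qed
    finally show ?case .
  qed
  from this[of UNIV s'] show "valid_profile k s' \<Longrightarrow> (\<forall>j. s' j \<le> s j) \<Longrightarrow> v i T s' \<le> v i T s" by simp
qed

lemma exists_level: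
  fixes x :: nat
  shows "1 \<le> x \<Longrightarrow> x < 2^L \<Longrightarrow> \<exists>l\<in>{1..L}. 2^(l-1) \<le> x \<and> x < 2^l"
proof (induction L)
  case 0 then show ?case by simp
next
  case (Suc L)
  show ?case
  proof (cases "x < 2^L")
    case True with Suc show ?thesis by force
  next
    case False with Suc.prems show ?thesis by (intro bexI[of _ "Suc L"]) auto
  qed
qed

lemma unique_level:
  fixes x :: nat
  assumes "1 \<le> l1" "1 \<le> l2" "2^(l1-1) \<le> x" "x < 2^l1" "2^(l2-1) \<le> x" "x < 2^l2"
  shows "l1 = l2"
proof (rule ccontr)
  assume "l1 \<noteq> l2"
  then consider "l1 < l2" | "l2 < l1" by linarith
  then show False
  proof cases
    case 1
    then have "(2::nat)^l1 \<le> 2^(l2-1)" by (intro power_increasing) auto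
    with assms show False by linarith
  next
    case 2
    then have "(2::nat)^l2 \<le> 2^(l1-1)" by (intro power_increasing) auto
    with assms show False by linarith
  qed
qed

lemma concave_bound:
  fixes v :: "'a \<Rightarrow> 'b set \<Rightarrow> ('a \<Rightarrow> nat) \<Rightarrow> real"
  assumes nonneg: "nonneg_vals k v" and mono: "monotone_vals k v"
    and sos: "strong_SOS k (v i T)"
    and t: "t \<le> x" "x < 2*t" "x < k"
  shows "v i T ((\<lambda>_. 0)(i := x)) \<le> 2 * v i T ((\<lambda>_. 0)(i := t))"
proof -
  define f where "f y = v i T ((\<lambda>_. 0)(i := y))" for y
  define d where "d = x - t"
  have xd: "x = t + d" using t d_def by simp
  have dt: "d \<le> t" using t d_def by simp
  have vz: "valid_profile k ((\<lambda>_. 0)(i := y))" if "y < k" for y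
    using that t unfolding valid_profile_def by auto
  have z0: "((\<lambda>_. 0::nat)(i := 0)) = (\<lambda>_. 0)" by auto
  have "f (t + d) - f t \<le> f (0 + d) - f 0"
    using sos[unfolded strong_SOS_def, rule_format, of "(\<lambda>_. 0)(i := t)" "(\<lambda>_. 0)" i d]
    using vz[of t] vz[of 0] t xd z0 unfolding f_def valid_profile_def by auto
  moreover have "f 0 \<ge> 0" using nonneg vz[of 0] t unfolding f_def nonneg_vals_def by auto
  moreover have "f d \<le> f t"
    using mono[unfolded monotone_vals_def, rule_format, of "(\<lambda>_. 0)(i := d)" t i] vz[of d] t dt
    unfolding f_def by auto
  moreover have "((\<lambda>_. 0::nat)(i := 0)) = (\<lambda>_. 0)" by auto
  ultimately show ?thesis using xd unfolding f_def by simp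
qed


lemma bucket_same:
  assumes "i \<in> rb_bucket l r" "i \<in> rb_bucket l r'" "\<forall>j. j \<noteq> i \<longrightarrow> r j = r' j"
  shows "rb_bucket l r = rb_bucket l r'"
  using assms unfolding rb_bucket_def by auto

lemma alloc_pay_same:
  assumes "i \<in> rb_bucket l r" "i \<in> rb_bucket l r'" "\<forall>j. j \<noteq> i \<longrightarrow> r j = r' j"
  shows "rb_alloc sel v l r = rb_alloc sel v l r'" "rb_pay sel v l r i = rb_pay sel v l r' i"
proof -
  have B: "rb_bucket l r = rb_bucket l r'" by (rule bucket_same[OF assms])
  have "rb_vbar v l r = rb_vbar v l r'"
  proof (intro ext)
    fix a T
    have "(\<lambda>j. if j \<in> rb_bucket l r then 2 ^ (l - 1) else r j) = (\<lambda>j. if j \<in> rb_bucket l r' then 2 ^ (l - 1) else r' j)"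
      using B assms by (auto intro!: ext)
    then show "rb_vbar v l r a T = rb_vbar v l r' a T" unfolding rb_vbar_def using B by simp
  qed
  then show A: "rb_alloc sel v l r = rb_alloc sel v l r'" unfolding rb_alloc_def using B by simp
  have "r(i := 2 ^ (l - 1) - 1) = r'(i := 2 ^ (l - 1) - 1)" using assms(3) by (auto intro!: ext)
  then show "rb_pay sel v l r i = rb_pay sel v l r' i" unfolding rb_pay_def using A B by simp
qed

lemma out_util:
  assumes sel: "argmax_selector sel" and norm: "normalized_vals k v" and vs: "valid_profile k s"
    and "i \<notin> rb_bucket l r"
  shows "rb_utility sel v l s r i = 0"
proof -
  have "rb_alloc sel v l r i = {}" using sel assms(4) unfolding rb_alloc_def argmax_selector_def by blast
  then show ?thesis using assms norm vs unfolding rb_utility_def rb_pay_def normalized_vals_def by simp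
qed

lemma IC_IR_l:
  fixes v :: "'a \<Rightarrow> 'b set \<Rightarrow> ('a \<Rightarrow> nat) \<Rightarrow> real"
  assumes mono: "monotone_vals k v" and norm: "normalized_vals k v" and sel: "argmax_selector sel"
    and t1: "1 \<le> (2::nat)^(l-1)" and tk: "(2::nat)^(l-1) < k" and vs: "valid_profile k s"
  shows "0 \<le> rb_utility sel v l s s i \<and> (\<forall>x. x < k \<longrightarrow> rb_utility sel v l s (s(i:=x)) i \<le> rb_utility sel v l s s i)"
proof -
  define t where "t = (2::nat)^(l-1)"
  have vt: "valid_profile k (s(i := t - 1))" using vs tk unfolding valid_profile_def t_def by auto
  have truth: "0 \<le> rb_utility sel v l s s i"
  proof (cases "i \<in> rb_bucket l s")
    case True
    then have "t \<le> s i" unfolding rb_bucket_def t_def by simp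
    then have "v i (rb_alloc sel v l s i) (s(i := t - 1)) \<le> v i (rb_alloc sel v l s i) ((s(i := t - 1))(i := s i))"
      using mono vt vs unfolding monotone_vals_def valid_profile_def by (metis fun_upd_same le_diff_conv trans_le_add1)
    then show ?thesis using True unfolding rb_utility_def rb_pay_def t_def by simp
  next
    case False then show ?thesis using out_util[OF sel norm vs] by simp
  qed
  moreover have "rb_utility sel v l s (s(i:=x)) i \<le> rb_utility sel v l s s i" if xk: "x < k" for x
  proof (cases "i \<in> rb_bucket l (s(i:=x))")
    case False then show ?thesis using out_util[OF sel norm vs] truth by simp
  next
    case inx: True
    show ?thesis
    proof (cases "i \<in> rb_bucket l s")
      case True
      have "\<forall>j. j \<noteq> i \<longrightarrow> (s(i:=x)) j = s j" by simp
      note e = alloc_pay_same[OF inx True this, of sel v]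
      show ?thesis unfolding rb_utility_def e by simp
    next
      case False
      then have "s i \<le> t - 1" unfolding rb_bucket_def t_def by simp
      then have le: "v i (rb_alloc sel v l (s(i:=x)) i) s \<le> v i (rb_alloc sel v l (s(i:=x)) i) (s(i := t - 1))"
        using mono vs tk unfolding monotone_vals_def t_def by simp
      have "rb_pay sel v l (s(i:=x)) i = v i (rb_alloc sel v l (s(i:=x)) i) (s(i := t - 1))"
        using inx unfolding rb_pay_def t_def by simp
      then have "rb_utility sel v l s (s(i:=x)) i \<le> 0" using le unfolding rb_utility_def by simp
      then show ?thesis using out_util[OF sel norm vs False] by simp
    qed
  qed
  ultimately show ?thesis by blast
qed


lemma level_welfare:
  fixes v :: "'a::finite \<Rightarrow> 'b set \<Rightarrow> ('a \<Rightarrow> nat) \<Rightarrow> real"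
  assumes nonneg: "nonneg_vals k v" and norm: "normalized_vals k v" and mono: "monotone_vals k v"
    and sos: "\<forall>i T. strong_SOS k (v i T)" and sel: "argmax_selector sel"
    and l1: "1 \<le> l" and tk: "(2::nat)^(l-1) < k" and vs: "valid_profile k s"
    and feas: "feasible_alloc T"
  shows "(\<Sum>i\<in>{i. 2^(l-1) \<le> s i \<and> s i < 2^l}. v i (T i) ((\<lambda>_. 0)(i := s i)))
           \<le> 2 * welfare v (rb_alloc sel v l s) s"
proof -
  define t where "t = (2::nat)^(l-1)"
  have tl: "(2::nat)^l = 2 * t" using l1 unfolding t_def by (cases l) auto
  define B where "B = rb_bucket l s"
  define P where "P = {i. t \<le> s i \<and> s i < 2 * t}"
  define sh where "sh = (\<lambda>j. if j \<in> B then t else s j)"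
  define A where "A = rb_alloc sel v l s"
  define T' where "T' = (\<lambda>i. if i \<in> P then T i else {})"
  have PB: "P \<subseteq> B" unfolding P_def B_def rb_bucket_def t_def by auto
  have vsh: "valid_profile k sh" using vs tk unfolding sh_def valid_profile_def t_def by auto
  have shle: "\<forall>j. sh j \<le> s j" unfolding sh_def B_def rb_bucket_def t_def by auto
  have vbar: "rb_vbar v l s i U = v i U sh" if "i \<in> B" for i U
    using that unfolding rb_vbar_def sh_def B_def t_def by simp
  have "(\<Sum>i\<in>P. v i (T i) ((\<lambda>_. 0)(i := s i))) \<le> (\<Sum>i\<in>P. 2 * v i (T i) sh)"
  proof (rule sum_mono)
    fix i assume iP: "i \<in> P"
    have "v i (T i) ((\<lambda>_. 0)(i := s i)) \<le> 2 * v i (T i) ((\<lambda>_. 0)(i := t))"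
      using concave_bound[OF nonneg mono sos[rule_format, of i "T i"], of t "s i"] iP vs
      unfolding P_def valid_profile_def fun_upd_def by auto
    also have "\<dots> \<le> 2 * v i (T i) sh"
      using multi_mono[OF mono vsh, of "(\<lambda>_. 0)(i := t)" i "T i"] iP PB tk
      unfolding sh_def valid_profile_def t_def by auto
    finally show "v i (T i) ((\<lambda>_. 0)(i := s i)) \<le> 2 * v i (T i) sh" .
  qed
  also have "\<dots> = 2 * (\<Sum>i\<in>P. v i (T i) sh)" by (simp add: sum_distrib_left)
  also have "(\<Sum>i\<in>P. v i (T i) sh) = (\<Sum>i\<in>B. rb_vbar v l s i (T' i))"
  proof -
    have "(\<Sum>i\<in>B. rb_vbar v l s i (T' i)) = (\<Sum>i\<in>B. if i \<in> P then v i (T i) sh else 0)"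
      using vbar norm vsh unfolding T'_def normalized_vals_def by (intro sum.cong) auto
    also have "\<dots> = (\<Sum>i\<in>P. v i (T i) sh)"
      using PB by (simp add: sum.inter_filter[symmetric] Int_absorb1 Collect_mem_eq)
        (metis (no_types) Int_absorb1 Int_def)
    finally show ?thesis by simp
  qed
  also have "(\<Sum>i\<in>B. rb_vbar v l s i (T' i)) \<le> (\<Sum>i\<in>B. rb_vbar v l s i (A i))"
  proof -
    have fT': "feasible_alloc T'" using feas unfolding feasible_alloc_def T'_def by auto
    have "\<forall>i. i \<notin> B \<longrightarrow> T' i = {}" using PB unfolding T'_def by auto
    then show ?thesis using sel fT' unfolding argmax_selector_def A_def rb_alloc_def B_def by blast
  qed
  also have "(\<Sum>i\<in>B. rb_vbar v l s i (A i)) = (\<Sum>i\<in>B. v i (A i) sh)"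
    using vbar by simp
  also have "\<dots> \<le> (\<Sum>i\<in>B. v i (A i) s)"
    by (intro sum_mono multi_mono[OF mono vs vsh shle])
  also have "\<dots> \<le> (\<Sum>i\<in>UNIV. v i (A i) s)"
    using nonneg vs unfolding nonneg_vals_def by (intro sum_mono2) auto
  finally show ?thesis unfolding welfare_def A_def P_def t_def tl[unfolded t_def] by (simp add: fun_upd_def)
qed


lemma dyadic_sum:
  fixes x :: nat and c :: real
  assumes "x < 2^L"
  shows "(\<Sum>l\<in>{1..L}. if 2^(l-1) \<le> x \<and> x < 2^l then c else 0) = (if 1 \<le> x then c else 0)"
proof (cases "1 \<le> x")
  case False
  then have "x = 0" by simp
  then show ?thesis by simp
next
  case True
  obtain l0 where l0: "l0 \<in> {1..L}" "2^(l0-1) \<le> x" "x < 2^l0" using exists_level[OF True assms] by blast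
  have "(\<Sum>l\<in>{1..L}. if 2^(l-1) \<le> x \<and> x < 2^l then c else 0) = (\<Sum>l\<in>{1..L}. if l = l0 then c else 0)"
    using l0 unique_level[of l0] by (intro sum.cong) auto
  also have "\<dots> = c" using l0 by simp
  finally show ?thesis using True by simp
qed

lemma SELF_eq:
  fixes v :: "'a::finite \<Rightarrow> 'b set \<Rightarrow> ('a \<Rightarrow> nat) \<Rightarrow> real"
  assumes k: "k = 2^L" and vs: "valid_profile k s"
  shows "SELF v k s T = (\<Sum>l = 1..L. \<Sum>i\<in>{i. 2^(l-1) \<le> s i \<and> s i < 2^l}. v i (T i) ((\<lambda>_. 0)(i := s i)))"
proof -
  define g where "g i = v i (T i) ((\<lambda>_. 0)(i := s i))" for i
  have cu: "sum f {x. P x} = (\<Sum>x\<in>UNIV. if P x then f x else 0)" for f :: "'a \<Rightarrow> real" and P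
    using sum.inter_filter[of UNIV f P] by simp
  have "(\<Sum>l = 1..L. \<Sum>i\<in>{i. 2^(l-1) \<le> s i \<and> s i < 2^l}. g i)
      = (\<Sum>l = 1..L. \<Sum>i\<in>UNIV. if 2^(l-1) \<le> s i \<and> s i < 2^l then g i else 0)"
    by (simp add: cu)
  also have "\<dots> = (\<Sum>i\<in>UNIV. \<Sum>l = 1..L. if 2^(l-1) \<le> s i \<and> s i < 2^l then g i else 0)"
    by (rule sum.swap)
  also have "\<dots> = (\<Sum>i\<in>UNIV. if 1 \<le> s i then g i else 0)"
    using vs k unfolding valid_profile_def by (intro sum.cong refl dyadic_sum) auto
  finally have 1: "(\<Sum>l = 1..L. \<Sum>i\<in>{i. 2^(l-1) \<le> s i \<and> s i < 2^l}. g i) = (\<Sum>i\<in>UNIV. if 1 \<le> s i then g i else 0)" .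
  have "SELF v k s T = (\<Sum>l = 1..k-1. \<Sum>i\<in>UNIV. if s i = l then g i else 0)"
    unfolding SELF_def g_def by (simp only: cu)
  also have "\<dots> = (\<Sum>i\<in>UNIV. \<Sum>l = 1..k-1. if s i = l then g i else 0)"
    by (rule sum.swap)
  also have "\<dots> = (\<Sum>i\<in>UNIV. if 1 \<le> s i then g i else 0)"
  proof (intro sum.cong refl)
    fix i
    have "s i < k" using vs unfolding valid_profile_def by simp
    then show "(\<Sum>l = 1..k-1. if s i = l then g i else 0) = (if 1 \<le> s i then g i else 0)"
      by (simp add: sum.delta) linarith
  qed
  finally show ?thesis using 1 unfolding g_def by simp
qed

theorem mainTheorem9:
  fixes v :: "'a::finite \<Rightarrow> 'b::finite set \<Rightarrow> ('a \<Rightarrow> nat) \<Rightarrow> real"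
    and sel :: "'a set \<Rightarrow> ('a \<Rightarrow> 'b set \<Rightarrow> real) \<Rightarrow> ('a \<Rightarrow> 'b set)"
    and k L :: nat
  assumes k_pow: "k = 2 ^ L" and k_ge: "k \<ge> 2"
    and nonneg: "nonneg_vals k v"
    and norm: "normalized_vals k v"
    and mono: "monotone_vals k v"
    and strict: "strict_own_vals k v"
    and sos: "\<forall>i T. strong_SOS k (v i T)"
    and sel: "argmax_selector sel"
  shows "rb_universal_IC_IR sel v k L \<and>
         (\<forall>s T. valid_profile k s \<longrightarrow> opt_alloc v s T \<longrightarrow>
            rb_expected_welfare sel v L s \<ge> SELF v k s T / (2 * log 2 (real k)))"
proof
  have tk: "(2::nat)^(l-1) < k" if "l \<in> {1..L}" for l
    using that k_pow by (auto intro: power_strict_increasing)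
  show "rb_universal_IC_IR sel v k L"
    unfolding rb_universal_IC_IR_def
    using IC_IR_l[OF mono norm sel] tk by simp
  show "\<forall>s T. valid_profile k s \<longrightarrow> opt_alloc v s T \<longrightarrow>
            rb_expected_welfare sel v L s \<ge> SELF v k s T / (2 * log 2 (real k))"
  proof (intro allI impI)
    fix s T assume vs: "valid_profile k s" and opt: "opt_alloc v s T"
    have feas: "feasible_alloc T" using opt unfolding opt_alloc_def by simp
    have L1: "L \<ge> 1" using k_pow k_ge by (cases L) auto
    have lg: "log 2 (real k) = real L" using k_pow by (simp add: log_nat_power)
    have "SELF v k s T \<le> (\<Sum>l = 1..L. 2 * welfare v (rb_alloc sel v l s) s)"
      unfolding SELF_eq[OF k_pow vs]
    proof (intro sum_mono)
      fix l assume lL: "l \<in> {1..L}"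
      then have "1 \<le> l" by simp
      from level_welfare[OF nonneg norm mono sos sel this tk[OF lL] vs feas]
      show "(\<Sum>i\<in>{i. 2^(l-1) \<le> s i \<and> s i < 2^l}. v i (T i) ((\<lambda>_. 0)(i := s i)))
           \<le> 2 * welfare v (rb_alloc sel v l s) s" .
    qed
    also have "\<dots> = 2 * (\<Sum>l = 1..L. welfare v (rb_alloc sel v l s) s)" by (simp add: sum_distrib_left)
    finally have "SELF v k s T / 2 \<le> (\<Sum>l = 1..L. welfare v (rb_alloc sel v l s) s)" by simp
    then have "SELF v k s T / 2 / real L \<le> (\<Sum>l = 1..L. welfare v (rb_alloc sel v l s) s) / real L"
      using L1 by (intro divide_right_mono) auto
    then show "rb_expected_welfare sel v L s \<ge> SELF v k s T / (2 * log 2 (real k))"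
      unfolding rb_expected_welfare_def lg by simp
  qed
qed

end
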